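(* For fixed positive integers $x$ and $y$, the expected maximum in-degree of the task-dependency graph generated by the $(x,y)$ edge-addition process on $n$ vertices is $\Theta(n)$, and the expected maximum out-degree of this graph is also $\Theta(n)$, as $n\to\infty$.
   Context: A task-dependency graph is a finite directed acyclic graph (no loops, no multiple edges). A vertex is initial if it has in-degree $0$ and terminal if it has out-degree $0$ (an isolated vertex is both). An $(x,y)$ task-dependency graph has exactly $x$ initial and exactly $y$ terminal vertices. The $(x,y)$ edge-addition process on $n$ vertices: start with the empty graph on $\{1,\dots,n\}$ and repeatedly add, uniformly at random, an edge $(a,b)$ with $a<b$ not yet present; if an addition would cause fewer than $x$ initial vertices or fewer than $y$ terminal vertices, it is cancelled. The process halts if the graph after some edge addition is an $(x,y)$ task-dependency graph, or if no more edges can be added; the result is the final graph. *)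

theory Defs
  imports "HOL-Probability.Probability" "HOL-Library.Landau_Symbols"
begin

text \<open>A graph on vertex set {1..n} is a set of edges (a,b) with a < b (hence acyclic).\<close>

definition initial_vertices :: "nat \<Rightarrow> (nat \<times> nat) set \<Rightarrow> nat set" where
  "initial_vertices n G = {v \<in> {1..n}. \<forall>a. (a, v) \<notin> G}"

definition terminal_vertices :: "nat \<Rightarrow> (nat \<times> nat) set \<Rightarrow> nat set" where
  "terminal_vertices n G = {v \<in> {1..n}. \<forall>b. (v, b) \<notin> G}"

definition is_xy_tdg :: "nat \<Rightarrow> nat \<Rightarrow> nat \<Rightarrow> (nat \<times> nat) set \<Rightarrow> bool" where
  "is_xy_tdg x y n G \<longleftrightarrow>
     card (initial_vertices n G) = x \<and> card (terminal_vertices n G) = y"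

definition addable_edges :: "nat \<Rightarrow> nat \<Rightarrow> nat \<Rightarrow> (nat \<times> nat) set \<Rightarrow> (nat \<times> nat) set" where
  "addable_edges x y n G = {(a, b). 1 \<le> a \<and> a < b \<and> b \<le> n \<and> (a, b) \<notin> G \<and>
      card (initial_vertices n (insert (a, b) G)) \<ge> x \<and>
      card (terminal_vertices n (insert (a, b) G)) \<ge> y}"

definition halted :: "nat \<Rightarrow> nat \<Rightarrow> nat \<Rightarrow> (nat \<times> nat) set \<Rightarrow> bool" where
  "halted x y n G \<longleftrightarrow> is_xy_tdg x y n G \<or> addable_edges x y n G = {}"

text \<open>Run the process for at most k successful edge additions. Cancelled attempts leave the
  graph unchanged, so the next successful addition is uniform over the addable edges.\<close>
fun run_process :: "nat \<Rightarrow> nat \<Rightarrow> nat \<Rightarrow> nat \<Rightarrow> (nat \<times> nat) set \<Rightarrow> (nat \<times> nat) set pmf" where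
  "run_process x y n 0 G = return_pmf G"
| "run_process x y n (Suc k) G =
     (if halted x y n G then return_pmf G
      else pmf_of_set (addable_edges x y n G) \<bind> (\<lambda>e. run_process x y n k (insert e G)))"

text \<open>Final graph: at most n choose 2 edges can ever be added, so this fuel suffices.\<close>
definition final_graph :: "nat \<Rightarrow> nat \<Rightarrow> nat \<Rightarrow> (nat \<times> nat) set pmf" where
  "final_graph x y n = run_process x y n (n choose 2) {}"

definition in_degree :: "(nat \<times> nat) set \<Rightarrow> nat \<Rightarrow> nat" where
  "in_degree G v = card {a. (a, v) \<in> G}"

definition out_degree :: "(nat \<times> nat) set \<Rightarrow> nat \<Rightarrow> nat" where
  "out_degree G v = card {b. (v, b) \<in> G}"

definition max_in_degree :: "nat \<Rightarrow> (nat \<times> nat) set \<Rightarrow> nat" where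
  "max_in_degree n G = Max (in_degree G ` {1..n})"

definition max_out_degree :: "nat \<Rightarrow> (nat \<times> nat) set \<Rightarrow> nat" where
  "max_out_degree n G = Max (out_degree G ` {1..n})"

end

theory Submission
  imports Defs
begin

lemma prob_bind_pmf: "measure_pmf.prob (bind_pmf p f) A = (\<integral>x. measure_pmf.prob (f x) A \<partial>p)"
  unfolding measure_pmf_bind
  by (rule measure_pmf.measure_bind[where N="count_space UNIV"]) (auto intro: measurable_pmf_measure1 simp: measure_pmf_in_subprob_algebra)

definition En :: "nat \<Rightarrow> (nat \<times> nat) set" where
  "En n = {(a,b). 1 \<le> a \<and> a < b \<and> b \<le> n}"

definition Tset :: "nat \<Rightarrow> nat \<Rightarrow> nat \<Rightarrow> (nat \<times> nat) set" where
  "Tset x y n = {(a,b). 1 \<le> a \<and> a < b \<and> b \<le> x+1} \<union> {(a,b). n - y \<le> a \<and> a < b \<and> b \<le> n}"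

lemma En_sub: "En n \<subseteq> {1..n} \<times> {1..n}" by (auto simp: En_def)

lemma finite_En: "finite (En n)" using En_sub finite_subset by blast

lemma card_En: "card (En n) = n choose 2"
proof (induction n)
  case 0
  have "En 0 = {}" by (auto simp: En_def)
  then show ?case by simp
next
  case (Suc n)
  have e: "En (Suc n) = En n \<union> (\<lambda>a. (a, Suc n)) ` {1..n}" by (auto simp: En_def)
  have d: "En n \<inter> (\<lambda>a. (a, Suc n)) ` {1..n} = {}" by (auto simp: En_def)
  have c: "card ((\<lambda>a. (a, Suc n)) ` {1..n}) = n" by (simp add: card_image inj_on_def)
  have "card (En (Suc n)) = card (En n) + n"
    unfolding e by (subst card_Un_disjoint) (use d c finite_En in auto)
  moreover have "Suc n choose 2 = n + (n choose 2)" by (simp add: numeral_2_eq_2)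
  ultimately show ?case using Suc by simp
qed

lemma Tset_sub: "Tset x y n \<subseteq> {1..x+1} \<times> {1..x+1} \<union> {n-y..n} \<times> {n-y..n}"
  unfolding Tset_def by auto

lemma finite_Tset: "finite (Tset x y n)"
  using Tset_sub finite_subset by (metis finite_SigmaI finite_Un finite_atLeastAtMost)

lemma card_Tset: "card (Tset x y n) \<le> (x+1)*(x+1) + (y+1)*(y+1)"
proof -
  have "card (Tset x y n) \<le> card ({1..x+1} \<times> {1..x+1} \<union> {n-y..n} \<times> {n-y..n})"
    by (rule card_mono[OF _ Tset_sub]) simp
  also have "\<dots> \<le> card ({1..x+1} \<times> {1..x+1}) + card ({n-y..n} \<times> {n-y..n})"
    by (rule card_Un_le)
  also have "\<dots> \<le> (x+1)*(x+1) + (y+1)*(y+1)"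
    using mult_le_mono[of "Suc n - (n - y)" "y+1" "Suc n - (n - y)" "y+1"] by (simp add: card_cartesian_product)
  finally show ?thesis .
qed

lemma Tset_12: "1 \<le> x \<Longrightarrow> (1,2) \<in> Tset x y n" by (auto simp: Tset_def)

lemma finite_initial: "finite (initial_vertices n G)"
  by (rule finite_subset[of _ "{1..n}"]) (auto simp: initial_vertices_def)

lemma finite_terminal: "finite (terminal_vertices n G)"
  by (rule finite_subset[of _ "{1..n}"]) (auto simp: terminal_vertices_def)

lemma init_big:
  assumes "G \<subseteq> En n" "G \<inter> Tset x y n = {}" "x+1 \<le> n"
  shows "x+1 \<le> card (initial_vertices n G)"
proof -
  have "{1..x+1} \<subseteq> initial_vertices n G"
  proof
    fix v assume v: "v \<in> {1..x+1}"
    have "(a, v) \<notin> G" for a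
    proof
      assume "(a, v) \<in> G"
      then have "(a,v) \<in> En n" "(a,v) \<notin> Tset x y n" using assms by auto
      then show False using v by (auto simp: En_def Tset_def)
    qed
    then show "v \<in> initial_vertices n G" using v assms(3) by (auto simp: initial_vertices_def)
  qed
  from card_mono[OF finite_initial this] show ?thesis by simp
qed

lemma term_big:
  assumes "G \<subseteq> En n" "G \<inter> Tset x y n = {}" "y+1 \<le> n"
  shows "y+1 \<le> card (terminal_vertices n G)"
proof -
  have "{n-y..n} \<subseteq> terminal_vertices n G"
  proof
    fix v assume v: "v \<in> {n-y..n}"
    have "(v, b) \<notin> G" for b
    proof
      assume "(v, b) \<in> G"
      then have "(v,b) \<in> En n" "(v,b) \<notin> Tset x y n" using assms by auto
      then show False using v by (auto simp: En_def Tset_def)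
    qed
    then show "v \<in> terminal_vertices n G" using v assms(3) by (auto simp: terminal_vertices_def)
  qed
  from card_mono[OF finite_terminal this] show ?thesis using assms(3) by simp
qed

lemma addable_eq:
  assumes "G \<subseteq> En n" "G \<inter> Tset x y n = {}" "x+1 \<le> n" "y+1 \<le> n"
  shows "addable_edges x y n G = En n - G"
proof
  show "addable_edges x y n G \<subseteq> En n - G" by (auto simp: addable_edges_def En_def)
next
  show "En n - G \<subseteq> addable_edges x y n G"
  proof
    fix e assume e: "e \<in> En n - G"
    obtain a b where ab: "e = (a,b)" by (cases e)
    have i1: "initial_vertices n G - {b} \<subseteq> initial_vertices n (insert (a,b) G)"
      by (auto simp: initial_vertices_def)
    have t1: "terminal_vertices n G - {a} \<subseteq> terminal_vertices n (insert (a,b) G)"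
      by (auto simp: terminal_vertices_def)
    have "card (initial_vertices n G) - card {b} \<le> card (initial_vertices n G - {b})"
      by (rule diff_card_le_card_Diff) simp
    also have "\<dots> \<le> card (initial_vertices n (insert (a,b) G))"
      by (rule card_mono[OF finite_initial i1])
    finally have I: "x \<le> card (initial_vertices n (insert (a,b) G))"
      using init_big[OF assms(1-3)] by simp
    have "card (terminal_vertices n G) - card {a} \<le> card (terminal_vertices n G - {a})"
      by (rule diff_card_le_card_Diff) simp
    also have "\<dots> \<le> card (terminal_vertices n (insert (a,b) G))"
      by (rule card_mono[OF finite_terminal t1])
    finally have T: "y \<le> card (terminal_vertices n (insert (a,b) G))"
      using term_big[OF assms(1,2,4)] by simp
    show "e \<in> addable_edges x y n G" using e I T unfolding ab
      by (auto simp: addable_edges_def En_def)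
  qed
qed

lemma halted_T:
  assumes "G \<subseteq> En n" "halted x y n G" "x+1 \<le> n" "y+1 \<le> n" "1 \<le> x"
  shows "G \<inter> Tset x y n \<noteq> {}"
proof
  assume T: "G \<inter> Tset x y n = {}"
  have "\<not> is_xy_tdg x y n G" using init_big[OF assms(1) T assms(3)] by (auto simp: is_xy_tdg_def)
  then have "En n - G = {}" using assms(2) addable_eq[OF assms(1) T assms(3,4)] by (simp add: halted_def)
  moreover have "(1,2) \<in> En n" using assms by (auto simp: En_def)
  ultimately have "(1,2) \<in> G" by blast
  then show False using T Tset_12[OF assms(5)] by blast
qed

lemma addable_sub: "addable_edges x y n G \<subseteq> En n" by (auto simp: addable_edges_def En_def)

lemma run_sub: "F \<in> set_pmf (run_process x y n k G) \<Longrightarrow> G \<subseteq> F \<and> F \<subseteq> G \<union> En n"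
proof (induction k arbitrary: G)
  case 0
  then show ?case by simp
next
  case (Suc k)
  show ?case
  proof (cases "halted x y n G")
    case True
    then show ?thesis using Suc.prems by simp
  next
    case False
    have ne: "addable_edges x y n G \<noteq> {}" using False by (simp add: halted_def)
    have fin: "finite (addable_edges x y n G)" by (rule finite_subset[OF addable_sub finite_En])
    have "F \<in> set_pmf (pmf_of_set (addable_edges x y n G) \<bind> (\<lambda>e. run_process x y n k (insert e G)))"
      using Suc.prems False by simp
    then obtain e where e: "e \<in> addable_edges x y n G"
      and F: "F \<in> set_pmf (run_process x y n k (insert e G))"
      using set_pmf_of_set[OF ne fin] by auto
    from Suc.IH[OF F] e addable_sub show ?thesis by blast
  qed
qed

lemma sum_ind_real: "finite A \<Longrightarrow> (\<Sum>x\<in>A. (indicator B x :: real)) = real (card (A \<inter> B))"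
  by (induction A rule: finite_induct) (auto simp: indicator_def Int_insert_left)

lemma main_bound:
  assumes x1: "1 \<le> x" and nx: "x+1 \<le> n" and ny: "y+1 \<le> n" and mN: "m < card (En n)"
  shows "G \<subseteq> En n \<Longrightarrow> G \<inter> Tset x y n = {} \<Longrightarrow> card (En n) \<le> card G + k \<Longrightarrow>
    measure_pmf.prob (run_process x y n k G) {F. card F \<le> m}
      \<le> real (m - card G) * real (card (Tset x y n)) / real (card (En n) - m)"
proof (induction k arbitrary: G)
  case 0
  have "card G \<le> card (En n)" by (rule card_mono[OF finite_En 0(1)])
  then have "G = En n" using card_subset_eq[OF finite_En 0(1)] 0(3) by simp
  moreover have "(1,2) \<in> En n" using x1 nx by (auto simp: En_def)
  ultimately show ?case using 0 Tset_12[OF x1] by blast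
next
  case (Suc k)
  define N where "N = card (En n)"
  define t where "t = card (Tset x y n)"
  define A where "A = addable_edges x y n G"
  have nh: "\<not> halted x y n G" using halted_T[OF Suc.prems(1) _ nx ny x1] Suc.prems(2) by blast
  have A: "A = En n - G" unfolding A_def by (rule addable_eq[OF Suc.prems(1,2) nx ny])
  have ne: "A \<noteq> {}" using nh by (simp add: halted_def A_def)
  have fin: "finite A" unfolding A_def by (rule finite_subset[OF addable_sub finite_En])
  have cA: "card A = N - card G" unfolding A N_def
    by (rule card_Diff_subset[OF finite_subset[OF Suc.prems(1) finite_En] Suc.prems(1)])
  have finG: "finite G" by (rule finite_subset[OF Suc.prems(1) finite_En])
  define P where "P = (\<lambda>e. measure_pmf.prob (run_process x y n k (insert e G)) {F. card F \<le> m})"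
  have run: "run_process x y n (Suc k) G = pmf_of_set A \<bind> (\<lambda>e. run_process x y n k (insert e G))"
    using nh by (simp add: A_def)
  have prob: "measure_pmf.prob (run_process x y n (Suc k) G) {F. card F \<le> m} = sum P A / card A"
    unfolding run prob_bind_pmf P_def by (rule integral_pmf_of_set[OF ne fin])
  show ?case
  proof (cases "m \<le> card G")
    case True
    have "P e = 0" if e: "e \<in> A" for e
    proof -
      have "set_pmf (run_process x y n k (insert e G)) \<inter> {F. card F \<le> m} = {}"
      proof (rule ccontr)
        assume "\<not> ?thesis"
        then obtain F where F: "F \<in> set_pmf (run_process x y n k (insert e G))" "card F \<le> m" by blast
        from run_sub[OF F(1)] have "insert e G \<subseteq> F" "F \<subseteq> insert e G \<union> En n" by auto
        moreover have "finite (insert e G \<union> En n)" using finG finite_En by simp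
        ultimately have "card (insert e G) \<le> card F" by (meson card_mono finite_subset)
        moreover have "e \<notin> G" using e A by auto
        ultimately show False using F(2) True finG by simp
      qed
      then show ?thesis unfolding P_def by (simp add: measure_pmf_zero_iff)
    qed
    then have "sum P A = 0" by simp
    then show ?thesis unfolding prob by simp
  next
    case False
    define B1 where "B1 = real (m - card (insert (0::nat,0::nat) G)) * real t / real (N - m)"
    have Pe: "P e \<le> indicator (Tset x y n) e + real (m - (card G + 1)) * real t / real (N - m)"
      if e: "e \<in> A" for e
    proof (cases "e \<in> Tset x y n")
      case True
      have "P e \<le> 1" unfolding P_def by simp
      moreover have "0 \<le> real (m - (card G + 1)) * real t / real (N - m)" by simp
      moreover have i: "indicator (Tset x y n) e = (1::real)" using True by simp
      ultimately show ?thesis unfolding i by (rule_tac add_increasing2) auto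
    next
      case eT: False
      have eG: "e \<notin> G" "e \<in> En n" using e A by auto
      have "P e \<le> real (m - card (insert e G)) * real t / real (N - m)"
        unfolding P_def t_def N_def
        by (rule Suc.IH) (use Suc.prems eG eT finG in auto)
      then show ?thesis using eG finG eT by simp
    qed
    have "sum P A \<le> (\<Sum>e\<in>A. indicator (Tset x y n) e + real (m - (card G + 1)) * real t / real (N - m))"
      by (rule sum_mono) (rule Pe)
    also have "\<dots> = real (card (A \<inter> Tset x y n)) + card A * (real (m - (card G + 1)) * real t / real (N - m))"
      by (simp add: sum.distrib fin sum_ind_real)
    finally have S: "sum P A \<le> real (card (A \<inter> Tset x y n)) + card A * (real (m - (card G + 1)) * real t / real (N - m))" .
    have cAT: "card (A \<inter> Tset x y n) \<le> t" unfolding t_def by (rule card_mono[OF finite_Tset]) auto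
    have cApos: "card A > 0" using fin ne by (simp add: card_gt_0_iff)
    have NmA: "N - m \<le> card A" using cA False by simp
    have Nm: "N - m > 0" using mN N_def by simp
    have "sum P A / card A \<le> (real (card (A \<inter> Tset x y n)) + card A * (real (m - (card G + 1)) * real t / real (N - m))) / card A"
      by (rule divide_right_mono[OF S]) simp
    also have "\<dots> = real (card (A \<inter> Tset x y n)) / card A + real (m - (card G + 1)) * real t / real (N - m)"
      using cApos by (simp add: add_divide_distrib)
    also have "\<dots> \<le> real t / real (N - m) + real (m - (card G + 1)) * real t / real (N - m)"
    proof -
      have "real (card (A \<inter> Tset x y n)) / card A \<le> real t / card A"
        using cAT cApos by (simp add: divide_right_mono)
      also have "\<dots> \<le> real t / real (N - m)"
        using NmA Nm by (simp add: frac_le)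
      finally show ?thesis by simp
    qed
    also have "\<dots> = real (m - card G) * real t / real (N - m)"
    proof -
      have eq: "real (m - card G) = real (m - (card G + 1)) + 1" using False by simp
      have gen: "\<And>r::real. (r + 1) * real t / real (N-m) = real t / real (N-m) + r * real t / real (N-m)"
        by (simp add: add_divide_distrib distrib_right)
      show ?thesis by (simp only: eq gen)
    qed
    finally show ?thesis unfolding prob t_def N_def .
  qed
qed

lemma two_card_En: "2 * card (En n) = n * (n - 1)"
proof (induction n)
  case 0 then show ?case by (simp add: card_En)
next
  case (Suc n)
  have "Suc n choose 2 = n + (n choose 2)" by (simp add: numeral_2_eq_2)
  then show ?case using Suc by (cases n) (auto simp: card_En algebra_simps)
qed

lemma final_prob:
  assumes "1 \<le> x" "x+1 \<le> n" "y+1 \<le> n" "m < card (En n)"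
  shows "measure_pmf.prob (final_graph x y n) {F. card F \<le> m}
     \<le> real m * real (card (Tset x y n)) / real (card (En n) - m)"
  using main_bound[OF assms, of "{}" "n choose 2"] by (simp add: final_graph_def card_En)

lemma final_sub: "F \<in> set_pmf (final_graph x y n) \<Longrightarrow> F \<subseteq> En n"
  using run_sub unfolding final_graph_def by blast

lemma finite_final: "finite (set_pmf (final_graph x y n))"
proof (rule finite_subset[of _ "Pow (En n)"])
  show "set_pmf (final_graph x y n) \<subseteq> Pow (En n)" using final_sub by blast
qed (simp add: finite_En)

lemma card_le_maxin:
  assumes "F \<subseteq> En n"
  shows "card F \<le> n * max_in_degree n F"
proof -
  have "F = (\<Union>v\<in>{1..n}. (\<lambda>a. (a, v)) ` {a. (a, v) \<in> F})"
  proof (rule equalityI; rule subsetI)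
    fix p assume p: "p \<in> F"
    obtain a b where ab: "p = (a, b)" by (cases p)
    have "b \<in> {1..n}" using p ab assms by (auto simp: En_def)
    moreover have "p \<in> (\<lambda>a. (a, b)) ` {a. (a, b) \<in> F}" using p ab by auto
    ultimately show "p \<in> (\<Union>v\<in>{1..n}. (\<lambda>a. (a, v)) ` {a. (a, v) \<in> F})" by blast
  qed auto
  then have "card F = card (\<Union>v\<in>{1..n}. (\<lambda>a. (a, v)) ` {a. (a, v) \<in> F})" by (rule arg_cong)
  also have "\<dots> \<le> (\<Sum>v\<in>{1..n}. card ((\<lambda>a. (a, v)) ` {a. (a, v) \<in> F}))"
    by (rule card_UN_le) simp
  also have "\<dots> = (\<Sum>v\<in>{1..n}. in_degree F v)"
    by (rule sum.cong) (auto simp: in_degree_def card_image inj_on_def)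
  also have "\<dots> \<le> card {1..n} * max_in_degree n F"
  proof -
    have "\<And>v. v \<in> {1..n} \<Longrightarrow> in_degree F v \<le> max_in_degree n F"
      unfolding max_in_degree_def by (rule Max_ge) auto
    then show ?thesis using sum_bounded_above[of "{1..n}" "in_degree F" "max_in_degree n F"] by simp
  qed
  finally show ?thesis by simp
qed

lemma card_le_maxout:
  assumes "F \<subseteq> En n"
  shows "card F \<le> n * max_out_degree n F"
proof -
  have "F = (\<Union>v\<in>{1..n}. (\<lambda>b. (v, b)) ` {b. (v, b) \<in> F})"
  proof (rule equalityI; rule subsetI)
    fix p assume p: "p \<in> F"
    obtain a b where ab: "p = (a, b)" by (cases p)
    have "a \<in> {1..n}" using p ab assms by (auto simp: En_def)
    moreover have "p \<in> (\<lambda>b. (a, b)) ` {b. (a, b) \<in> F}" using p ab by auto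
    ultimately show "p \<in> (\<Union>v\<in>{1..n}. (\<lambda>b. (v, b)) ` {b. (v, b) \<in> F})" by blast
  qed auto
  then have "card F = card (\<Union>v\<in>{1..n}. (\<lambda>b. (v, b)) ` {b. (v, b) \<in> F})" by (rule arg_cong)
  also have "\<dots> \<le> (\<Sum>v\<in>{1..n}. card ((\<lambda>b. (v, b)) ` {b. (v, b) \<in> F}))"
    by (rule card_UN_le) simp
  also have "\<dots> = (\<Sum>v\<in>{1..n}. out_degree F v)"
    by (rule sum.cong) (auto simp: out_degree_def card_image inj_on_def)
  also have "\<dots> \<le> card {1..n} * max_out_degree n F"
  proof -
    have "\<And>v. v \<in> {1..n} \<Longrightarrow> out_degree F v \<le> max_out_degree n F"
      unfolding max_out_degree_def by (rule Max_ge) auto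
    then show ?thesis using sum_bounded_above[of "{1..n}" "out_degree F" "max_out_degree n F"] by simp
  qed
  finally show ?thesis by simp
qed

lemma maxin_le:
  assumes "F \<subseteq> En n" "1 \<le> n"
  shows "max_in_degree n F \<le> n"
  unfolding max_in_degree_def
proof (rule Max.boundedI)
  show "in_degree F ` {1..n} \<noteq> {}" using assms by auto
  fix d assume "d \<in> in_degree F ` {1..n}"
  then obtain v where "d = in_degree F v" by auto
  moreover have "{a. (a, v) \<in> F} \<subseteq> {1..n}" using assms by (auto simp: En_def)
  ultimately show "d \<le> n" unfolding in_degree_def by (metis card_atLeastAtMost card_mono diff_Suc_1 finite_atLeastAtMost)
qed simp

lemma maxout_le:
  assumes "F \<subseteq> En n" "1 \<le> n"
  shows "max_out_degree n F \<le> n"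
  unfolding max_out_degree_def
proof (rule Max.boundedI)
  show "out_degree F ` {1..n} \<noteq> {}" using assms by auto
  fix d assume "d \<in> out_degree F ` {1..n}"
  then obtain v where "d = out_degree F v" by auto
  moreover have "{b. (v, b) \<in> F} \<subseteq> {1..n}" using assms by (auto simp: En_def)
  ultimately show "d \<le> n" unfolding out_degree_def by (metis card_atLeastAtMost card_mono diff_Suc_1 finite_atLeastAtMost)
qed simp

lemma expect_bounds:
  fixes D :: "(nat \<times> nat) set \<Rightarrow> nat"
  assumes x1: "1 \<le> x" and nx: "x+1 \<le> n" and ny: "y+1 \<le> n"
    and D: "\<And>F. F \<subseteq> En n \<Longrightarrow> D F \<le> n \<and> card F \<le> n * D F"
  shows "measure_pmf.expectation (final_graph x y n) (\<lambda>G. real (D G)) \<le> real n"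
    and "real n / (24 * real (card (Tset x y n))) \<le> measure_pmf.expectation (final_graph x y n) (\<lambda>G. real (D G))"
proof -
  let ?p = "final_graph x y n"
  have int: "integrable (measure_pmf ?p) f" for f :: "_ \<Rightarrow> real"
    by (rule integrable_measure_pmf_finite[OF finite_final])
  have AE1: "AE F in measure_pmf ?p. real (D F) \<le> real n"
    by (rule AE_pmfI) (use D final_sub in auto)
  show "measure_pmf.expectation ?p (\<lambda>G. real (D G)) \<le> real n"
    by (rule measure_pmf.integral_le_const[OF int AE1])
  define N where "N = card (En n)"
  define t where "t = card (Tset x y n)"
  define m where "m = N div (4 * t)"
  have t1: "1 \<le> t" unfolding t_def using Tset_12[OF x1] finite_Tset
    by (metis One_nat_def Suc_leI card_gt_0_iff empty_iff)
  have n2: "2 \<le> n" using x1 nx by simp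
  have twoN: "2 * N = n * (n - 1)" unfolding N_def by (rule two_card_En)
  have N1: "1 \<le> N"
  proof -
    have "2 \<le> n * (n - 1)" using mult_le_mono[of 2 n 1 "n-1"] n2 by simp
    then show ?thesis using twoN by simp
  qed
  have dm: "N div (4*t) * (4*t) + N mod (4*t) = N" by (rule div_mult_mod_eq)
  have m4: "m * (4*t) \<le> N" using dm unfolding m_def by linarith
  have modlt: "N mod (4*t) < 4*t" using t1 by simp
  have mlt: "N < (m+1)*(4*t)" using dm modlt unfolding m_def by (simp add: algebra_simps)
  have "m * 4 \<le> m * (4*t)" using t1 by simp
  then have mN: "m < N" using m4 N1 by linarith
  have pb: "measure_pmf.prob ?p {F. card F \<le> m} \<le> real m * real t / real (N - m)"
    unfolding t_def N_def by (rule final_prob[OF x1 nx ny]) (use mN N_def in simp)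
  have "3 * (m * t) + m \<le> N"
  proof -
    have "m \<le> m * t" using t1 by simp
    moreover have "m * (4 * t) = 3 * (m * t) + m * t" by simp
    ultimately show ?thesis using m4 by linarith
  qed
  then have "3 * (real m * real t) + real m \<le> real N" by (metis of_nat_le_iff of_nat_add of_nat_mult of_nat_numeral)
  then have "3 * (real m * real t) \<le> real (N - m)" using mN by (simp add: of_nat_diff)
  then have pb3: "real m * real t / real (N - m) \<le> 1/3" using mN by (simp add: divide_simps)
  define c where "c = real (m+1) / real n"
  have ge: "c * indicator {F. \<not> card F \<le> m} F \<le> real (D F)" if F: "F \<in> set_pmf ?p" for F
  proof (cases "card F \<le> m")
    case True then show ?thesis by simp
  next
    case False
    have "m + 1 \<le> n * D F" using D[OF final_sub[OF F]] False by simp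
    then have "real (m+1) \<le> real n * real (D F)" by (metis of_nat_le_iff of_nat_mult)
    then have "c \<le> real (D F)" unfolding c_def using n2 by (simp add: divide_simps mult.commute)
    then show ?thesis using False by simp
  qed
  have "c * measure_pmf.prob ?p {F. \<not> card F \<le> m} = measure_pmf.expectation ?p (\<lambda>F. c * indicator {F. \<not> card F \<le> m} F)"
    by simp
  also have "\<dots> \<le> measure_pmf.expectation ?p (\<lambda>G. real (D G))"
    by (rule integral_mono_AE[OF int int]) (rule AE_pmfI, rule ge)
  finally have E1: "c * measure_pmf.prob ?p {F. \<not> card F \<le> m} \<le> measure_pmf.expectation ?p (\<lambda>G. real (D G))" .
  have "measure_pmf.prob ?p {F. \<not> card F \<le> m} = measure_pmf.prob ?p (space (measure_pmf ?p) - {F. card F \<le> m})"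
    by (rule arg_cong[where f="measure_pmf.prob ?p"]) auto
  also have "\<dots> = 1 - measure_pmf.prob ?p {F. card F \<le> m}"
    by (rule measure_pmf.prob_compl) simp
  moreover have "measure_pmf.prob ?p {F. card F \<le> m} \<le> 1/3" using pb pb3 by (rule order_trans)
  ultimately have "measure_pmf.prob ?p {F. \<not> card F \<le> m} \<ge> 2/3" by linarith
  moreover have c0: "0 \<le> c" unfolding c_def by simp
  ultimately have E2: "c * (2/3) \<le> measure_pmf.expectation ?p (\<lambda>G. real (D G))"
    using E1 by (meson mult_left_mono order_trans)
  have "n * n \<le> 16 * t * (m + 1)"
  proof -
    have "n * n \<le> 2 * (n * (n - 1))" using n2 by (cases n) (auto simp: algebra_simps)
    also have "\<dots> = 4 * N" using twoN by simp
    also have "\<dots> \<le> 16 * t * (m+1)" using mlt by (simp add: algebra_simps)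
    finally show ?thesis .
  qed
  then have nn: "real n * real n \<le> 16 * real t * real (m + 1)" by (metis of_nat_le_iff of_nat_mult of_nat_numeral)
  have "real n / (24 * real t) \<le> c * (2/3)"
    unfolding c_def using n2 t1 nn by (simp add: divide_simps) (simp add: algebra_simps)
  then show "real n / (24 * real (card (Tset x y n))) \<le> measure_pmf.expectation ?p (\<lambda>G. real (D G))"
    using E2 unfolding t_def by linarith
qed

lemma theta_gen:
  fixes D :: "nat \<Rightarrow> (nat \<times> nat) set \<Rightarrow> nat"
  assumes x1: "1 \<le> x"
    and D: "\<And>n F. 1 \<le> n \<Longrightarrow> F \<subseteq> En n \<Longrightarrow> D n F \<le> n \<and> card F \<le> n * D n F"
  shows "(\<lambda>n. measure_pmf.expectation (final_graph x y n) (\<lambda>G. real (D n G))) \<in> \<Theta>(\<lambda>n. real n)"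
proof -
  define K where "K = (x+1)*(x+1) + (y+1)*(y+1)"
  have K1: "1 \<le> K" unfolding K_def by simp
  let ?f = "\<lambda>n. measure_pmf.expectation (final_graph x y n) (\<lambda>G. real (D n G))"
  have ev: "eventually (\<lambda>n. x + 1 + (y + 1) \<le> n) at_top" by (rule eventually_ge_at_top)
  have B: "0 \<le> ?f n \<and> ?f n \<le> real n \<and> real n \<le> (24 * real K) * ?f n" if n: "x + 1 + (y + 1) \<le> n" for n
  proof -
    have nx: "x+1 \<le> n" and ny: "y+1 \<le> n" using n by auto
    have Dn: "\<And>F. F \<subseteq> En n \<Longrightarrow> D n F \<le> n \<and> card F \<le> n * D n F" using D nx by simp
    note eb = expect_bounds[OF x1 nx ny Dn]
    have t1: "1 \<le> card (Tset x y n)" using Tset_12[OF x1] finite_Tset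
      by (metis One_nat_def Suc_leI card_gt_0_iff empty_iff)
    have tK: "real (card (Tset x y n)) \<le> real K" unfolding K_def using card_Tset[of x y n]
      by (metis of_nat_le_iff)
    have "real n / (24 * real K) \<le> real n / (24 * real (card (Tset x y n)))"
      using t1 tK by (intro divide_left_mono) auto
    also have "\<dots> \<le> ?f n" by (rule eb(2))
    finally have "real n \<le> (24 * real K) * ?f n" using K1 by (simp add: divide_simps mult.commute)
    moreover have "0 \<le> ?f n" by (rule integral_nonneg_AE) simp
    ultimately show ?thesis using eb(1) by simp
  qed
  have O: "?f \<in> O(\<lambda>n. real n)"
  proof (rule bigoI[where c=1])
    show "eventually (\<lambda>n. norm (?f n) \<le> 1 * norm (real n)) at_top"
      using ev by (rule eventually_mono) (use B in auto)
  qed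
  have "(\<lambda>n. real n) \<in> O(?f)"
  proof (rule bigoI[where c="24 * real K"])
    show "eventually (\<lambda>n. norm (real n) \<le> (24 * real K) * norm (?f n)) at_top"
      using ev by (rule eventually_mono) (use B in auto)
  qed
  then have "?f \<in> \<Omega>(\<lambda>n. real n)" by (simp add: bigomega_iff_bigo)
  with O show ?thesis by (rule bigthetaI)
qed

theorem mainTheorem16:
  fixes x y :: nat
  assumes "x \<ge> 1" and "y \<ge> 1"
  shows "(\<lambda>n. measure_pmf.expectation (final_graph x y n) (\<lambda>G. real (max_in_degree n G)))
           \<in> \<Theta>(\<lambda>n. real n)
       \<and> (\<lambda>n. measure_pmf.expectation (final_graph x y n) (\<lambda>G. real (max_out_degree n G)))
           \<in> \<Theta>(\<lambda>n. real n)"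
proof
  show "(\<lambda>n. measure_pmf.expectation (final_graph x y n) (\<lambda>G. real (max_in_degree n G)))
           \<in> \<Theta>(\<lambda>n. real n)"
    by (rule theta_gen[OF assms(1)]) (use maxin_le card_le_maxin in auto)
  show "(\<lambda>n. measure_pmf.expectation (final_graph x y n) (\<lambda>G. real (max_out_degree n G)))
           \<in> \<Theta>(\<lambda>n. real n)"
    by (rule theta_gen[OF assms(1)]) (use maxout_le card_le_maxout in auto)
qed

end
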